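(* Let $\alpha=(\alpha_1,\dots,\alpha_s)\in\mathbb{K}_s$ and $1\le i\le s$. If $\alpha^i$ is symmetric, then $\alpha^j$ is non-symmetric for every $1\le j\le s$ with $j\neq i$.
   Context: $\mathbb{K}_s=\{(\alpha_1,\dots,\alpha_s)\in\mathbb{Z}^s:\ \alpha_k\alpha_{k+1}<0 \text{ for all } 1\le k\le s-1\}$, with all entries nonzero. For $\beta=(\beta_1,\dots,\beta_s)\in\mathbb{Z}^s$, $-\beta=(-\beta_1,\dots,-\beta_s)$ and $\overline{\beta}=(\beta_s,\dots,\beta_1)$; $\beta$ is symmetric if $\beta=-\overline{\beta}$ (as tuples). For $1\le i\le s$, $\alpha^i=(\alpha_1,\dots,\alpha_{i-1},\alpha_i*1,\alpha_{i+1},\dots,\alpha_s)$, where $\alpha_i*1=\alpha_i-1$ if $\alpha_i>0$ and $\alpha_i*1=\alpha_i+1$ otherwise. *)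

theory Defs
  imports Main
begin

text \<open>Tuples in Z^s are represented as int lists of length s; the paper's index k
  (1-based) corresponds to list position k - 1.\<close>

definition K :: "nat \<Rightarrow> int list set" where
  "K s = {a. length a = s \<and> (\<forall>k<s. a ! k \<noteq> 0) \<and>
              (\<forall>k. k + 1 < s \<longrightarrow> a ! k * a ! (k + 1) < 0)}"

definition star1 :: "int \<Rightarrow> int" where
  "star1 x = (if x > 0 then x - 1 else x + 1)"

definition alpha_mod :: "int list \<Rightarrow> nat \<Rightarrow> int list" where
  "alpha_mod a i = a[i - 1 := star1 (a ! (i - 1))]"

definition symmetric :: "int list \<Rightarrow> bool" where
  "symmetric b \<longleftrightarrow> b = map uminus (rev b)"

end

theory Submission
  imports Defs
begin

lemma sym_nth:
  assumes "symmetric b" "k < length b"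
  shows "b ! k = - (b ! (length b - 1 - k))"
proof -
  have "b ! k = map uminus (rev b) ! k" using assms(1) unfolding symmetric_def by metis
  also have "\<dots> = - (b ! (length b - 1 - k))" using assms(2) by (simp add: rev_nth)
  finally show ?thesis .
qed

theorem lemma2:
  fixes \<alpha> :: "int list" and s i :: nat
  assumes "\<alpha> \<in> K s" and "1 \<le> i" and "i \<le> s"
    and "symmetric (alpha_mod \<alpha> i)"
  shows "\<forall>j. 1 \<le> j \<and> j \<le> s \<and> j \<noteq> i \<longrightarrow> \<not> symmetric (alpha_mod \<alpha> j)"
proof (intro allI impI notI)
  fix j assume j: "1 \<le> j \<and> j \<le> s \<and> j \<noteq> i" and cs: "symmetric (alpha_mod \<alpha> j)"
  define p where "p = i - 1"
  define q where "q = j - 1"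
  have len: "length \<alpha> = s" and nz: "\<And>k. k < s \<Longrightarrow> \<alpha> ! k \<noteq> 0"
    using assms(1) unfolding K_def by auto
  have pq: "p < s" "q < s" "p \<noteq> q" using j assms(2,3) unfolding p_def q_def by auto
  define b where "b = \<alpha>[p := star1 (\<alpha> ! p)]"
  define c where "c = \<alpha>[q := star1 (\<alpha> ! q)]"
  have bs: "symmetric b" using assms(4) unfolding b_def p_def alpha_mod_def .
  have csym: "symmetric c" using cs unfolding c_def q_def alpha_mod_def .
  have lb: "length b = s" "length c = s" using len unfolding b_def c_def by auto
  have hb: "\<And>k. k < s \<Longrightarrow> b ! k = - (b ! (s - 1 - k))" using sym_nth[OF bs] lb by metis
  have hc: "\<And>k. k < s \<Longrightarrow> c ! k = - (c ! (s - 1 - k))" using sym_nth[OF csym] lb by metis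
  define r where "r = s - 1 - p"
  have r: "r < s" "s - 1 - r = p" using pq unfolding r_def by auto
  have st: "\<And>x::int. star1 x \<noteq> x" unfolding star1_def by auto
  have bp: "b ! p = star1 (\<alpha> ! p)" using pq len unfolding b_def by simp
  have cp: "c ! p = \<alpha> ! p" using pq len unfolding c_def by simp
  show False
  proof (cases "r = p")
    case True
    then show False using hc[OF pq(1)] cp nz[OF pq(1)] r_def by simp
  next
    case rp: False
    show False
    proof (cases "r = q")
      case False
      have "b ! r = \<alpha> ! r" "c ! r = \<alpha> ! r" using rp False unfolding b_def c_def by auto
      then show False using hb[OF pq(1)] hc[OF pq(1)] bp cp st r_def by metis
    next
      case True
      have e1: "star1 (\<alpha> ! p) = - (\<alpha> ! q)"
        using hb[OF pq(1)] bp True pq len unfolding r_def b_def by simp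
      have e2: "star1 (\<alpha> ! q) = - (\<alpha> ! p)"
        using hc[OF pq(2)] True r pq len unfolding c_def by simp
      show False using e1 e2 nz[OF pq(2)] nz[OF pq(1)] unfolding star1_def by (auto split: if_splits)
    qed
  qed
qed

end
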